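(* Let $\beta \in (0,d]$ and $1\leq p<+\infty$. Let $Q_0\subset\mathbb{R}^d$ be a cube. If $u \in BMO^\beta(Q_0)$ and $\phi:\mathbb{R}\to\mathbb{R}$ is Lipschitz with $\phi(0)=0$, then $\phi \circ u \in BMO^\beta(Q_0)$ and $$\|\phi \circ u \|_{BMO^{\beta}(Q_0)} \leq \operatorname{Lip}(\phi) \|u\|_{BMO^{\beta}(Q_0)}.$$
   Context: For $\beta\in(0,d]$ and $E\subset\mathbb{R}^d$, the spherical Hausdorff content is $\mathcal{H}^{\beta}_{\infty}(E)= \inf \{\sum_{i} \omega_\beta r_i^\beta : E \subset \bigcup_{i} B(x_i,r_i) \}$ (countable covers by balls), with $\omega_\beta= \pi^{\beta/2}/\Gamma(\beta/2+1)$. A function $f$ is $\mathcal{H}^\beta_\infty$-quasicontinuous if for every $\epsilon>0$ there is an open set $O$ with $\mathcal{H}^\beta_\infty(O)<\epsilon$ and $f|_{O^c}$ continuous. For a set $A$ and non-negative $f$, the Choquet integral is $\int_A f\,d\mathcal{H}^\beta_\infty=\int_0^\infty \mathcal{H}^\beta_\infty(\{x\in A: f(x)>t\})\,dt$. $L^1(Q_0;\mathcal{H}^\beta_\infty)$ is the set of $\mathcal{H}^\beta_\infty$-quasicontinuous $f$ with $\int_{Q_0}|f|\,d\mathcal{H}^\beta_\infty<\infty$. For $u\in L^1(Q_0;\mathcal{H}^\beta_\infty)$, $\|u\|_{BMO^{\beta}(Q_0)}= \sup_{Q \subset Q_0} \inf_{c \in \mathbb{R}} l(Q)^{-\beta}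 \int_{Q} |u-c| \,d\mathcal{H}^{\beta}_\infty$, the supremum over all finite subcubes $Q\subset Q_0$ with sides parallel to those of $Q_0$, $l(Q)$ the side length; $BMO^\beta(Q_0)$ is the set of $u\in L^1(Q_0;\mathcal{H}^\beta_\infty)$ with this quantity finite. $\operatorname{Lip}(\phi)$ is the Lipschitz constant of $\phi$. *)

theory Defs
  imports "HOL-Analysis.Analysis"
begin

definition omega_beta :: "real \<Rightarrow> real" where
  "omega_beta \<beta> = pi powr (\<beta> / 2) / Gamma (\<beta> / 2 + 1)"

text \<open>Spherical Hausdorff content: infimum over countable covers by balls
  (finite covers included via balls of radius 0, which are empty).\<close>
definition hcontent :: "real \<Rightarrow> 'a::euclidean_space set \<Rightarrow> ennreal" where
  "hcontent \<beta> E = (INF r \<in> {r :: nat \<Rightarrow> real. (\<forall>i. r i \<ge> 0) \<and>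
        (\<exists>x :: nat \<Rightarrow> 'a. E \<subseteq> (\<Union>i. ball (x i) (r i)))}.
        (\<Sum>i. ennreal (omega_beta \<beta> * (r i) powr \<beta>)))"

definition choquet :: "real \<Rightarrow> 'a::euclidean_space set \<Rightarrow> ('a \<Rightarrow> real) \<Rightarrow> ennreal" where
  "choquet \<beta> A f = (\<integral>\<^sup>+ t\<in>{0..}. hcontent \<beta> {x \<in> A. f x > t} \<partial>lborel)"

definition quasicontinuous_on :: "real \<Rightarrow> 'a::euclidean_space set \<Rightarrow> ('a \<Rightarrow> real) \<Rightarrow> bool" where
  "quasicontinuous_on \<beta> Q f \<longleftrightarrow>
     (\<forall>\<epsilon>>0. \<exists>U. open U \<and> hcontent \<beta> U < ennreal \<epsilon> \<and> continuous_on (Q - U) f)"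

definition L1_H :: "real \<Rightarrow> 'a::euclidean_space set \<Rightarrow> ('a \<Rightarrow> real) set" where
  "L1_H \<beta> Q = {f. quasicontinuous_on \<beta> Q f \<and> choquet \<beta> Q (\<lambda>x. \<bar>f x\<bar>) < \<infinity>}"

definition cube :: "'a::euclidean_space \<Rightarrow> real \<Rightarrow> 'a set" where
  "cube a l = cbox a (a + l *\<^sub>R One)"

definition bmo_norm :: "real \<Rightarrow> 'a::euclidean_space set \<Rightarrow> ('a \<Rightarrow> real) \<Rightarrow> ennreal" where
  "bmo_norm \<beta> Q0 u = (SUP al \<in> {(a, l). l > 0 \<and> cube a l \<subseteq> Q0}.
      INF c. ennreal ((snd al) powr (-\<beta>)) * choquet \<beta> (cube (fst al) (snd al)) (\<lambda>x. \<bar>u x - c\<bar>))"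

definition BMO :: "real \<Rightarrow> 'a::euclidean_space set \<Rightarrow> ('a \<Rightarrow> real) set" where
  "BMO \<beta> Q0 = {u \<in> L1_H \<beta> Q0. bmo_norm \<beta> Q0 u < \<infinity>}"

definition Lip :: "(real \<Rightarrow> real) \<Rightarrow> real" where
  "Lip \<phi> = (SUP xy \<in> {(x, y). x \<noteq> y}. \<bar>\<phi> (fst xy) - \<phi> (snd xy)\<bar> / \<bar>fst xy - snd xy\<bar>)"

end

theory Submission
  imports Defs
begin

lemma hcontent_mono: "A \<subseteq> B \<Longrightarrow> hcontent \<beta> A \<le> hcontent \<beta> B"
  unfolding hcontent_def by (rule INF_superset_mono) (auto, meson order_trans)

lemma hcontent_empty: "hcontent \<beta> {} = 0"
proof -
  have "hcontent \<beta> {} \<le> (\<Sum>i. ennreal (omega_beta \<beta> * ((\<lambda>_. 0::real) i) powr \<beta>))"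
    unfolding hcontent_def by (rule INF_lower) auto
  also have "\<dots> = 0" by simp
  finally show ?thesis by simp
qed

lemma choquet_mono:
  assumes "\<And>x. x \<in> A \<Longrightarrow> f x \<le> g x"
  shows "choquet \<beta> A f \<le> choquet \<beta> A g"
  unfolding choquet_def
  by (intro nn_integral_mono mult_right_mono hcontent_mono) (use assms in force)+

lemma antimono_meas:
  fixes h :: "real \<Rightarrow> ennreal"
  assumes "\<And>s t. s \<le> t \<Longrightarrow> h t \<le> h s"
  shows "h \<in> borel_measurable borel"
proof (rule borel_measurableI_greater)
  fix y
  have "is_interval {x. y < h x}"
    unfolding is_interval_1 using assms by (auto intro: less_le_trans)
  then show "{x \<in> space borel. y < h x} \<in> sets borel"
    using real_interval_borel_measurable by simp
qed

lemma choquet_scale: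
  assumes "L > 0"
  shows "choquet \<beta> A (\<lambda>x. L * g x) = ennreal L * choquet \<beta> A g"
proof -
  define F where "F t = hcontent \<beta> {x \<in> A. L * g x > t} * indicator {0..} t" for t
  have h[measurable]: "(\<lambda>t. hcontent \<beta> {x \<in> A. L * g x > t}) \<in> borel_measurable borel"
    by (intro antimono_meas hcontent_mono) auto
  have m: "F \<in> borel_measurable borel"
    unfolding F_def by measurable
  have "choquet \<beta> A (\<lambda>x. L * g x) = (\<integral>\<^sup>+t. F t \<partial>lborel)"
    unfolding choquet_def F_def by simp
  also have "\<dots> = \<bar>L\<bar> * (\<integral>\<^sup>+t. F (0 + L * t) \<partial>lborel)"
    by (rule nn_integral_real_affine[OF m]) (use assms in auto)
  also have "(\<lambda>t. F (0 + L * t)) = (\<lambda>t. hcontent \<beta> {x \<in> A. g x > t} * indicator {0..} t)"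
    using assms by (auto simp: F_def indicator_def zero_le_mult_iff)
  finally show ?thesis unfolding choquet_def using assms by simp
qed

lemma choquet_scale_le:
  assumes "L \<ge> 0"
  shows "choquet \<beta> A (\<lambda>x. L * g x) \<le> ennreal L * choquet \<beta> A g"
proof (cases "L = 0")
  case True
  have z: "hcontent \<beta> {x\<in>A. t < L * g x} * indicator {0..} t = 0" for t
    using True by (auto simp: indicator_def hcontent_empty)
  have "choquet \<beta> A (\<lambda>x. L * g x) = (\<integral>\<^sup>+t. 0 \<partial>lborel)"
    unfolding choquet_def z by simp
  then show ?thesis by simp
next
  case False
  then show ?thesis using choquet_scale[of L \<beta> A g] assms by simp
qed

theorem theorem1p1:
  fixes u :: "'a::euclidean_space \<Rightarrow> real" and \<phi> :: "real \<Rightarrow> real"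
    and \<beta> p l0 :: real and a0 :: 'a
  assumes "0 < \<beta>" "\<beta> \<le> real DIM('a)"
    and "1 \<le> p"
    and "0 < l0"
    and "u \<in> BMO \<beta> (cube a0 l0)"
    and "\<exists>C. lipschitz_on C UNIV \<phi>"
    and "\<phi> 0 = 0"
  shows "(\<phi> \<circ> u) \<in> BMO \<beta> (cube a0 l0)
    \<and> bmo_norm \<beta> (cube a0 l0) (\<phi> \<circ> u) \<le> ennreal (Lip \<phi>) * bmo_norm \<beta> (cube a0 l0) u"
proof -
  define Q where "Q = cube a0 l0"
  define L where "L = Lip \<phi>"
  obtain C where C: "lipschitz_on C UNIV \<phi>" using assms(6) by blast
  have C0: "C \<ge> 0" and Cb: "\<And>x y. \<bar>\<phi> x - \<phi> y\<bar> \<le> C * \<bar>x - y\<bar>"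
    using C unfolding lipschitz_on_def dist_real_def by auto
  have bdd: "bdd_above ((\<lambda>xy. \<bar>\<phi> (fst xy) - \<phi> (snd xy)\<bar> / \<bar>fst xy - snd xy\<bar>) ` {(x, y). x \<noteq> y})"
  proof (rule bdd_aboveI2)
    fix xy :: "real \<times> real" assume "xy \<in> {(x, y). x \<noteq> y}"
    then show "\<bar>\<phi> (fst xy) - \<phi> (snd xy)\<bar> / \<bar>fst xy - snd xy\<bar> \<le> C"
      using Cb[of "fst xy" "snd xy"] by (auto simp: divide_le_eq)
  qed
  have Lb: "\<bar>\<phi> x - \<phi> y\<bar> \<le> L * \<bar>x - y\<bar>" for x y
  proof (cases "x = y")
    case False
    have "\<bar>\<phi> x - \<phi> y\<bar> / \<bar>x - y\<bar> \<le> L"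
      unfolding L_def Lip_def using cSUP_upper[OF _ bdd, of "(x,y)"] False by auto
    then show ?thesis using False by (auto simp: divide_le_eq mult.commute)
  qed simp
  have L0: "L \<ge> 0"
    unfolding L_def Lip_def using cSUP_upper[OF _ bdd, of "(0,1)"] by (auto intro: order_trans[rotated])
  have contphi: "continuous_on UNIV \<phi>" using C by (rule lipschitz_on_continuous_on)
  from assms(5) have uL: "u \<in> L1_H \<beta> Q" and un: "bmo_norm \<beta> Q u < \<infinity>"
    unfolding BMO_def Q_def by auto
  have qc: "quasicontinuous_on \<beta> Q (\<phi> \<circ> u)"
    unfolding quasicontinuous_on_def
  proof (intro allI impI)
    fix e :: real assume "e > 0"
    then obtain U where "open U" "hcontent \<beta> U < ennreal e" "continuous_on (Q - U) u"
      using uL unfolding L1_H_def quasicontinuous_on_def by blast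
    then show "\<exists>U. open U \<and> hcontent \<beta> U < ennreal e \<and> continuous_on (Q - U) (\<phi> \<circ> u)"
      by (intro exI[of _ U]) (auto intro: continuous_on_compose2[OF contphi])
  qed
  have "choquet \<beta> Q (\<lambda>x. \<bar>(\<phi> \<circ> u) x\<bar>) \<le> choquet \<beta> Q (\<lambda>x. L * \<bar>u x\<bar>)"
    using Lb[of "u _" 0] assms(7) by (intro choquet_mono) auto
  also have "\<dots> \<le> ennreal L * choquet \<beta> Q (\<lambda>x. \<bar>u x\<bar>)"
    by (rule choquet_scale_le[OF L0])
  also have "\<dots> < \<infinity>"
    using uL unfolding L1_H_def by (simp add: ennreal_mult_less_top)
  finally have L1: "(\<phi> \<circ> u) \<in> L1_H \<beta> Q" using qc unfolding L1_H_def by auto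
  have key: "bmo_norm \<beta> Q (\<phi> \<circ> u) \<le> ennreal L * bmo_norm \<beta> Q u"
    unfolding bmo_norm_def
  proof (rule SUP_least)
    fix al :: "'a \<times> real" assume al: "al \<in> {(a, l). l > 0 \<and> cube a l \<subseteq> Q}"
    define F where "F c = ennreal ((snd al) powr (-\<beta>)) * choquet \<beta> (cube (fst al) (snd al)) (\<lambda>x. \<bar>(\<phi> \<circ> u) x - c\<bar>)" for c
    define G where "G c = ennreal ((snd al) powr (-\<beta>)) * choquet \<beta> (cube (fst al) (snd al)) (\<lambda>x. \<bar>u x - c\<bar>)" for c
    have FG: "(INF c. F c) \<le> ennreal L * G c" for c
    proof -
      have "(INF c. F c) \<le> F (\<phi> c)" by (rule INF_lower) simp
      also have "\<dots> \<le> ennreal ((snd al) powr (-\<beta>)) * choquet \<beta> (cube (fst al) (snd al)) (\<lambda>x. L * \<bar>u x - c\<bar>)"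
        unfolding F_def using Lb by (intro mult_left_mono choquet_mono) auto
      also have "\<dots> \<le> ennreal ((snd al) powr (-\<beta>)) * (ennreal L * choquet \<beta> (cube (fst al) (snd al)) (\<lambda>x. \<bar>u x - c\<bar>))"
        by (intro mult_left_mono choquet_scale_le L0) auto
      also have "\<dots> = ennreal L * G c" unfolding G_def by (simp add: ac_simps)
      finally show ?thesis .
    qed
    have inf: "(INF c. F c) \<le> ennreal L * (INF c. G c)"
    proof (cases "L = 0")
      case True
      then show ?thesis using FG[of 0] by simp
    next
      case False
      then have Lp: "L > 0" using L0 by simp
      have "ennreal (1/L) * (INF c. F c) \<le> (INF c. G c)"
      proof (rule INF_greatest)
        fix c
        have "ennreal (1/L) * (INF c. F c) \<le> ennreal (1/L) * (ennreal L * G c)"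
          by (intro mult_left_mono FG) auto
        also have "\<dots> = G c" using Lp
          by (simp add: mult.assoc[symmetric] ennreal_mult''[symmetric])
        finally show "ennreal (1/L) * (INF c. F c) \<le> G c" .
      qed
      then have "ennreal L * (ennreal (1/L) * (INF c. F c)) \<le> ennreal L * (INF c. G c)"
        by (intro mult_left_mono) auto
      moreover have "ennreal L * (ennreal (1/L) * (INF c. F c)) = (INF c. F c)" using Lp
        by (simp add: mult.assoc[symmetric] ennreal_mult''[symmetric])
      ultimately show ?thesis by simp
    qed
    also have "\<dots> \<le> ennreal L * (SUP al\<in>{(a, l). l > 0 \<and> cube a l \<subseteq> Q}. INF c. ennreal ((snd al) powr (-\<beta>)) * choquet \<beta> (cube (fst al) (snd al)) (\<lambda>x. \<bar>u x - c\<bar>))"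
      unfolding G_def by (intro mult_left_mono SUP_upper al) auto
    finally show "(INF c. ennreal ((snd al) powr (-\<beta>)) * choquet \<beta> (cube (fst al) (snd al)) (\<lambda>x. \<bar>(\<phi> \<circ> u) x - c\<bar>))
        \<le> ennreal L * (SUP al\<in>{(a, l). l > 0 \<and> cube a l \<subseteq> Q}. INF c. ennreal ((snd al) powr (-\<beta>)) * choquet \<beta> (cube (fst al) (snd al)) (\<lambda>x. \<bar>u x - c\<bar>))"
      unfolding F_def .
  qed
  also have "\<dots> < \<infinity>" using un by (simp add: ennreal_mult_less_top)
  finally have "bmo_norm \<beta> Q (\<phi> \<circ> u) < \<infinity>" .
  then show ?thesis using L1 key unfolding BMO_def Q_def L_def by auto
qed

end
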